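(* Let $w\in\Sigma^*$ label a path in the NFA $\mathcal{A}$ from a state $A$ to a state $A'$. Then this path is unique: whenever $w=uv$ and $A\xrightarrow{u}B\xrightarrow{v}A'$ and $A\xrightarrow{u}B'\xrightarrow{v}A'$ in $\mathcal{A}$, we have $B=B'$.
   Context: $\Sigma$ is a finite alphabet with involution $a\mapsto\overline a$ (bijection, $\overline{\overline a}=a$), extended to words by $\overline{a_1\cdots a_m}=\overline{a_m}\cdots\overline{a_1}$. $k\ge1$ is a fixed integer, $[k]=\{0,\dots,k\}$. $\mathcal{A}_1$ is a complete DFA with state set $\mathcal{Q}_1$, initial state $q_{01}$, final states $\mathcal{F}_1$; $\mathcal{A}_2$ is a complete DFA with state set $\mathcal{Q}_2$, initial state $q_{02}$, final states $\mathcal{F}_2$; $p\cdot w$ denotes the state reached from $p$ reading $w$. Let $\mathcal{Q}=\{(q_{01}\cdot w,q_{02}\cdot w): w\in\Sigma^*\}$ and for $P=(p_1,p_2)\in\mathcal{Q}$ put $P\cdot a=(p_1\cdot a,p_2\cdot a)$. A quadruple $(p_1,p_2,q_1,q_2)\in\mathcal{Q}_1\times\mathcal{Q}_2\times\mathcal{Q}_1\times\mathcal{Q}_2$ is a bridge if $B(p_1,p_2,q_1,q_2)=\{\beta: p_1\cdot\beta=q_1,\ p_2\cdot\overline\beta=q_2\}\neq\emptyset$. The NFA $\mathcal{A}$ has state set $\{((p_1,p_2),q_1,q_2,\ell): (p_1,p_2)\in\mathcal{Q},\ q_i\in\mathcal{Q}_i,\ \ell\in[k],\ (p_1,p_2,q_1,q_2)\text{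 a bridge}\}$ and, for $a\in\Sigma$, the following $a$-transitions, present whenever both endpoints are states of $\mathcal{A}$: $(P,q_1\cdot\overline a,q_2\cdot\overline a,0)\xrightarrow{a}(P\cdot a,q_1,q_2,0)$ if $q_1\cdot\overline a\notin\mathcal{F}_1$ and $q_2\cdot\overline a\notin\mathcal{F}_2$; $(P,q_1\cdot\overline a,q_2\cdot\overline a,0)\xrightarrow{a}(P\cdot a,q_1,q_2,1)$ if $q_1\cdot\overline a\in\mathcal{F}_1$ or $q_2\cdot\overline a\in\mathcal{F}_2$; $(P,q_1\cdot\overline a,q_2\cdot\overline a,\ell)\xrightarrow{a}(P\cdot a,q_1,q_2,\ell+1)$ for $1\le\ell<k$. Initial states of $\mathcal{A}$ are the states $((q_{01},q_{02}),q_1',q_2',0)$, final states are the states at level $k$. *)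

theory Defs
  imports Main
begin

definition dstar :: "('s \<Rightarrow> 'a \<Rightarrow> 's) \<Rightarrow> 's \<Rightarrow> 'a list \<Rightarrow> 's" where
  "dstar \<delta> p w = foldl \<delta> p w"

definition wbar :: "('a \<Rightarrow> 'a) \<Rightarrow> 'a list \<Rightarrow> 'a list" where
  "wbar \<iota> w = rev (map \<iota> w)"

definition reachQ :: "('s1 \<Rightarrow> 'a \<Rightarrow> 's1) \<Rightarrow> 's1 \<Rightarrow> ('s2 \<Rightarrow> 'a \<Rightarrow> 's2) \<Rightarrow> 's2 \<Rightarrow> ('s1 \<times> 's2) set" where
  "reachQ \<delta>1 q01 \<delta>2 q02 = {(dstar \<delta>1 q01 w, dstar \<delta>2 q02 w) | w. True}"

definition bridge :: "('a \<Rightarrow> 'a) \<Rightarrow> ('s1 \<Rightarrow> 'a \<Rightarrow> 's1) \<Rightarrow> ('s2 \<Rightarrow> 'a \<Rightarrow> 's2)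
    \<Rightarrow> 's1 \<Rightarrow> 's2 \<Rightarrow> 's1 \<Rightarrow> 's2 \<Rightarrow> bool" where
  "bridge \<iota> \<delta>1 \<delta>2 p1 p2 q1 q2 \<longleftrightarrow> (\<exists>\<beta>. dstar \<delta>1 p1 \<beta> = q1 \<and> dstar \<delta>2 p2 (wbar \<iota> \<beta>) = q2)"

type_synonym ('s1, 's2) nstate = "('s1 \<times> 's2) \<times> 's1 \<times> 's2 \<times> nat"

definition is_nstate :: "('a \<Rightarrow> 'a) \<Rightarrow> nat \<Rightarrow> ('s1 \<Rightarrow> 'a \<Rightarrow> 's1) \<Rightarrow> 's1 \<Rightarrow> ('s2 \<Rightarrow> 'a \<Rightarrow> 's2) \<Rightarrow> 's2
    \<Rightarrow> ('s1, 's2) nstate \<Rightarrow> bool" where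
  "is_nstate \<iota> k \<delta>1 q01 \<delta>2 q02 s \<longleftrightarrow>
     (case s of (P, q1, q2, l) \<Rightarrow>
        P \<in> reachQ \<delta>1 q01 \<delta>2 q02 \<and> l \<le> k \<and> bridge \<iota> \<delta>1 \<delta>2 (fst P) (snd P) q1 q2)"

definition ntrans :: "('a \<Rightarrow> 'a) \<Rightarrow> nat \<Rightarrow> ('s1 \<Rightarrow> 'a \<Rightarrow> 's1) \<Rightarrow> 's1 \<Rightarrow> 's1 set
    \<Rightarrow> ('s2 \<Rightarrow> 'a \<Rightarrow> 's2) \<Rightarrow> 's2 \<Rightarrow> 's2 set
    \<Rightarrow> ('s1, 's2) nstate \<Rightarrow> 'a \<Rightarrow> ('s1, 's2) nstate \<Rightarrow> bool" where
  "ntrans \<iota> k \<delta>1 q01 F1 \<delta>2 q02 F2 s a t \<longleftrightarrow>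
     is_nstate \<iota> k \<delta>1 q01 \<delta>2 q02 s \<and> is_nstate \<iota> k \<delta>1 q01 \<delta>2 q02 t \<and>
     (case s of (P, r1, r2, l) \<Rightarrow> case t of (P', q1, q2, l') \<Rightarrow>
        P' = (\<delta>1 (fst P) a, \<delta>2 (snd P) a) \<and> r1 = \<delta>1 q1 (\<iota> a) \<and> r2 = \<delta>2 q2 (\<iota> a) \<and>
        ((l = 0 \<and> l' = 0 \<and> r1 \<notin> F1 \<and> r2 \<notin> F2) \<or>
         (l = 0 \<and> l' = 1 \<and> (r1 \<in> F1 \<or> r2 \<in> F2)) \<or>
         (1 \<le> l \<and> l < k \<and> l' = l + 1)))"

inductive npath :: "('a \<Rightarrow> 'a) \<Rightarrow> nat \<Rightarrow> ('s1 \<Rightarrow> 'a \<Rightarrow> 's1) \<Rightarrow> 's1 \<Rightarrow> 's1 set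
    \<Rightarrow> ('s2 \<Rightarrow> 'a \<Rightarrow> 's2) \<Rightarrow> 's2 \<Rightarrow> 's2 set
    \<Rightarrow> ('s1, 's2) nstate \<Rightarrow> 'a list \<Rightarrow> ('s1, 's2) nstate \<Rightarrow> bool"
  for \<iota> k \<delta>1 q01 F1 \<delta>2 q02 F2 where
  npath_nil: "is_nstate \<iota> k \<delta>1 q01 \<delta>2 q02 s \<Longrightarrow> npath \<iota> k \<delta>1 q01 F1 \<delta>2 q02 F2 s [] s"
| npath_cons: "ntrans \<iota> k \<delta>1 q01 F1 \<delta>2 q02 F2 s a t \<Longrightarrow> npath \<iota> k \<delta>1 q01 F1 \<delta>2 q02 F2 t w u
     \<Longrightarrow> npath \<iota> k \<delta>1 q01 F1 \<delta>2 q02 F2 s (a # w) u"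

end

theory Submission
  imports Defs
begin

lemma npath_fst:
  "npath \<iota> k \<delta>1 q01 F1 \<delta>2 q02 F2 s w t \<Longrightarrow>
   fst t = (dstar \<delta>1 (fst (fst s)) w, dstar \<delta>2 (snd (fst s)) w)"
proof (induction rule: npath.induct)
  case (npath_nil s) then show ?case by (simp add: dstar_def)
next
  case (npath_cons s a t w u)
  then show ?case by (auto simp: ntrans_def dstar_def split: prod.splits)
qed

lemma ntrans_back:
  assumes "ntrans \<iota> k \<delta>1 q01 F1 \<delta>2 q02 F2 s a t"
    and "ntrans \<iota> k \<delta>1 q01 F1 \<delta>2 q02 F2 s' a t'"
    and "snd t = snd t'"
  shows "snd s = snd s'"
  using assms by (auto simp: ntrans_def split: prod.splits)

lemma npath_snd:
  "npath \<iota> k \<delta>1 q01 F1 \<delta>2 q02 F2 s w t \<Longrightarrow>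
   npath \<iota> k \<delta>1 q01 F1 \<delta>2 q02 F2 s' w t \<Longrightarrow> snd s = snd s'"
proof (induction arbitrary: s' rule: npath.induct)
  case (npath_nil s)
  from npath_nil.prems show ?case by (cases rule: npath.cases) auto
next
  case (npath_cons s a t w u)
  from npath_cons.prems obtain t' where t': "ntrans \<iota> k \<delta>1 q01 F1 \<delta>2 q02 F2 s' a t'"
    "npath \<iota> k \<delta>1 q01 F1 \<delta>2 q02 F2 t' w u"
    by (cases rule: npath.cases) auto
  then have "snd t = snd t'" using npath_cons.IH by blast
  then show ?case by (rule ntrans_back[OF npath_cons.hyps(1) t'(1)])
qed

theorem lemma4:
  fixes \<iota> :: "'a::finite \<Rightarrow> 'a"
    and k :: nat
    and \<delta>1 :: "'s1::finite \<Rightarrow> 'a \<Rightarrow> 's1" and q01 :: 's1 and F1 :: "'s1 set"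
    and \<delta>2 :: "'s2::finite \<Rightarrow> 'a \<Rightarrow> 's2" and q02 :: 's2 and F2 :: "'s2 set"
    and A A' B B' :: "('s1, 's2) nstate"
    and u v :: "'a list"
  assumes inv: "\<And>a. \<iota> (\<iota> a) = a"
    and k: "k \<ge> 1"
    and path: "npath \<iota> k \<delta>1 q01 F1 \<delta>2 q02 F2 A (u @ v) A'"
    and B1: "npath \<iota> k \<delta>1 q01 F1 \<delta>2 q02 F2 A u B"
    and B2: "npath \<iota> k \<delta>1 q01 F1 \<delta>2 q02 F2 B v A'"
    and B'1: "npath \<iota> k \<delta>1 q01 F1 \<delta>2 q02 F2 A u B'"
    and B'2: "npath \<iota> k \<delta>1 q01 F1 \<delta>2 q02 F2 B' v A'"
  shows "B = B'"
proof (rule prod_eqI)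
  show "fst B = fst B'" using npath_fst[OF B1] npath_fst[OF B'1] by simp
  show "snd B = snd B'" using npath_snd[OF B2 B'2] .
qed

end
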